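(* Let $p > 3$ be a prime number. Then $p$ is a Cantor prime if and only if $p$ satisfies an equation of the form $2pK + 1 = 3^q$, where $q$ is the multiplicative order of $3$ modulo $p$ and $K$ is a sum of distinct powers $3^d$ with integer exponents $0 \le d < q$ (equivalently, $K = \sum_{i=1}^{n} 3^{d_i}$ for some $n \ge 1$ and distinct integers $0 \le d_i < q$).
   Context: The middle-third Cantor set $\mathcal{C}_3$ is the set of points of $[0,1]$ admitting a base-$3$ expansion $\sum_{k\ge 1} a_k 3^{-k}$ with every digit $a_k \in \{0,2\}$. A Cantor prime is a prime number $p$ such that $1/p \in \mathcal{C}_3$. *)

theory Defs
  imports "HOL-Analysis.Analysis" "HOL-Number_Theory.Number_Theory"
begin

text \<open>Middle-third Cantor set: points admitting a base-3 expansion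
  sum_{k>=1} a_k 3^(-k) with all digits in {0,2}. Digit a k here is the
  (k+1)-th digit.\<close>
definition cantor_set3 :: "real set" where
  "cantor_set3 = {x. \<exists>a::nat \<Rightarrow> nat. (\<forall>k. a k \<in> {0, 2}) \<and>
                       (\<lambda>k. real (a k) / 3 ^ (k + 1)) sums x}"

definition cantor_prime :: "nat \<Rightarrow> bool" where
  "cantor_prime p \<longleftrightarrow> prime p \<and> 1 / real p \<in> cantor_set3"

end

theory Submission
  imports Defs
begin

lemma finsum_rev:
  fixes a :: "nat \<Rightarrow> nat"
  shows "(\<Sum>k<q. real (a k) / 3 ^ (k + 1)) = real (\<Sum>d<q. a (q - 1 - d) * 3 ^ d) / 3 ^ q"
proof -
  have "(\<Sum>k<q. real (a k) / 3 ^ (k + 1)) = (\<Sum>k<q. real (a k * 3 ^ (q - 1 - k)) / 3 ^ q)"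
  proof (rule sum.cong)
    fix k assume "k \<in> {..<q}"
    then have "k+1+(q-1-k) = q" by simp
    then have e: "(3::real) ^ q = 3 ^ (k+1) * 3 ^ (q - 1 - k)"
      by (metis power_add)
    show "real (a k) / 3 ^ (k + 1) = real (a k * 3 ^ (q - 1 - k)) / 3 ^ q"
      by (simp add: e)
  qed simp
  also have "\<dots> = real (\<Sum>k<q. a k * 3 ^ (q - 1 - k)) / 3 ^ q"
    by (simp add: sum_divide_distrib)
  also have "(\<Sum>k<q. a k * 3 ^ (q - 1 - k)) = (\<Sum>d<q. a (q - Suc d) * 3 ^ (q - 1 - (q - Suc d)))"
    by (rule sum.nat_diff_reindex[symmetric])
  also have "\<dots> = (\<Sum>d<q. a (q - 1 - d) * 3 ^ d)"
    by (rule sum.cong) auto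
  finally show ?thesis .
qed

lemma sumD:
  fixes a :: "nat \<Rightarrow> nat"
  assumes "\<And>d. d < q \<Longrightarrow> a (q - 1 - d) = (if d \<in> D then 2 else 0)" "D \<subseteq> {..<q}"
  shows "(\<Sum>d<q. a (q - 1 - d) * 3 ^ d) = 2 * (\<Sum>d\<in>D. 3 ^ d)"
proof -
  have "(\<Sum>d<q. a (q - 1 - d) * 3 ^ d) = (\<Sum>d<q. if d \<in> D then 2 * 3 ^ d else 0)"
  proof (rule sum.cong)
    fix d assume "d \<in> {..<q}"
    then show "a (q - 1 - d) * 3 ^ d = (if d \<in> D then 2 * 3 ^ d else 0)"
      using assms(1)[of d] by auto
  qed simp
  also have "\<dots> = (\<Sum>d\<in>{..<q} \<inter> D. 2 * 3 ^ d)"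
    by (rule sum.inter_restrict[symmetric]) simp
  also have "{..<q} \<inter> D = D" using assms(2) by blast
  finally show ?thesis by (simp add: sum_distrib_left)
qed

theorem theorem2p1:
  fixes p :: nat
  assumes "prime p" and "p > 3"
  shows "cantor_prime p \<longleftrightarrow>
    (\<exists>K::nat. \<exists>D::nat set. D \<noteq> {} \<and> D \<subseteq> {..<ord p 3} \<and>
        K = (\<Sum>d\<in>D. 3 ^ d) \<and> 2 * p * K + 1 = 3 ^ (ord p 3))"
proof -
  define q where "q = ord p 3"
  have cop: "coprime p 3"
  proof (rule prime_imp_coprime[OF assms(1)])
    show "\<not> p dvd 3" using assms(2) by (auto dest: dvd_imp_le)
  qed
  have q0: "q > 0" using cop ord_eq_0[of p 3] unfolding q_def by auto
  have "[3 ^ q = 1] (mod p)" using ord_works[of 3 p] unfolding q_def by blast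
  then have "p dvd 3 ^ q - 1"
    by (metis cong_to_1_nat)
  then obtain m where m: "3 ^ q - 1 = p * m" by (auto elim: dvdE)
  have q1: "(3::nat) ^ q \<ge> 1" by simp
  have m3: "3 ^ q = p * m + 1" using m q1 by linarith
  have m3r: "(3::real) ^ q = real p * real m + 1"
    using arg_cong[OF m3, of real] by simp
  have pp: "real p > 3" using assms(2) by simp
  show ?thesis
  proof
    assume "cantor_prime p"
    then obtain a where a: "\<forall>k. a k \<in> {0, 2::nat}"
      and s: "(\<lambda>k. real (a k) / 3 ^ (k + 1)) sums (1 / real p)"
      unfolding cantor_prime_def cantor_set3_def by blast
    define f where "f = (\<lambda>k. real (a k) / 3 ^ (k + 1))"
    define F where "F = (\<Sum>k<q. f k)"
    define N where "N = (\<Sum>d<q. a (q - 1 - d) * 3 ^ d)"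
    have FN: "F = real N / 3 ^ q" unfolding F_def N_def f_def by (rule finsum_rev)
    have sh: "(\<lambda>i. f (i + q)) sums (1 / real p - F)"
      using s sums_iff_shift[of f q "1 / real p - F"] unfolding f_def F_def by simp
    have geo: "(\<lambda>i. 2 / 3 ^ (q + 1) * (1/3::real) ^ i) sums (2 / 3 ^ (q + 1) * (1 / (1 - 1/3)))"
      by (rule sums_mult) (rule geometric_sums, simp)
    have "(2::real) / 3 ^ (q + 1) * (1 / (1 - 1/3)) = 1 / 3 ^ q" by simp
    note geo = geo[unfolded this]
    have le1: "1 / real p - F \<le> 1 / 3 ^ q"
    proof (rule sums_le[OF _ sh geo])
      fix i
      have "real (a (i + q)) \<le> 2" using a[rule_format, of "i + q"] by auto
      then show "f (i + q) \<le> 2 / 3 ^ (q + 1) * (1 / 3) ^ i"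
        unfolding f_def by (simp add: power_add field_simps power_divide)
    qed
    have ge0: "0 \<le> 1 / real p - F"
      by (rule sums_le[OF _ sums_zero sh]) (simp add: f_def)
    have A: "real N \<le> 3 ^ q / real p" using ge0 FN by (simp add: field_simps)
    have "(1 / real p - F) * 3 ^ q \<le> 1 / 3 ^ q * 3 ^ q"
      using le1 by (intro mult_right_mono) auto
    moreover have "(1 / real p - F) * 3 ^ q = 3 ^ q / real p - real N"
      by (simp add: FN algebra_simps)
    moreover have "1 / 3 ^ q * 3 ^ q = (1::real)" by simp
    ultimately have B: "3 ^ q / real p \<le> 1 + real N" by linarith
    have e: "3 ^ q / real p = real m + 1 / real p" using m3r pp by (simp add: field_simps)
    have ip: "1 / real p < 1" "0 < 1 / real p" using pp by auto
    have "real N < real m + 1" using A e ip by linarith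
    moreover have "real m < real N + 1" using B e ip by linarith
    ultimately have Nm: "N = m" by linarith
    define D where "D = {d. d < q \<and> a (q - 1 - d) = 2}"
    have DN: "N = 2 * (\<Sum>d\<in>D. 3 ^ d)"
      unfolding N_def
      by (rule sumD) (use a in \<open>auto simp: D_def\<close>)
    show "\<exists>K::nat. \<exists>D::nat set. D \<noteq> {} \<and> D \<subseteq> {..<ord p 3} \<and>
        K = (\<Sum>d\<in>D. 3 ^ d) \<and> 2 * p * K + 1 = 3 ^ (ord p 3)"
    proof (intro exI conjI)
      show "D \<subseteq> {..<ord p 3}" unfolding D_def q_def by auto
      show "2 * p * (\<Sum>d\<in>D. 3 ^ d) + 1 = 3 ^ ord p 3"
        using m3 DN Nm unfolding q_def by simp
      show "D \<noteq> {}"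
      proof
        assume "D = {}"
        then have "3 ^ q = (1::nat)" using m3 DN Nm by simp
        then show False using q0 by simp
      qed
    qed simp
  next
    assume "\<exists>K::nat. \<exists>D::nat set. D \<noteq> {} \<and> D \<subseteq> {..<ord p 3} \<and>
        K = (\<Sum>d\<in>D. 3 ^ d) \<and> 2 * p * K + 1 = 3 ^ (ord p 3)"
    then obtain D where D: "D \<subseteq> {..<q}" and K: "2 * p * (\<Sum>d\<in>D. 3 ^ d) + 1 = 3 ^ q"
      unfolding q_def by blast
    define K where "K = (\<Sum>d\<in>D. (3::nat) ^ d)"
    define a where "a = (\<lambda>k. if q - 1 - k mod q \<in> D then 2 else (0::nat))"
    define f where "f = (\<lambda>k. real (a k) / 3 ^ (k + 1))"
    have a2: "\<forall>k. a k \<in> {0, 2}" unfolding a_def by auto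
    have fle: "norm (f k) \<le> 2 * (1/3) ^ k" for k
      unfolding f_def a_def by (auto simp: field_simps power_divide)
    have "summable (\<lambda>k. 2 * (1/3::real) ^ k)" by (intro summable_mult summable_geometric) simp
    then have summ: "summable f" by (rule summable_comparison_test') (rule fle)
    define S where "S = suminf f"
    have fS: "f sums S" using summ S_def summable_sums by blast
    have per: "f (i + q) = f i / 3 ^ q" for i
    proof -
      have "a (i + q) = a i" unfolding a_def by simp
      then show ?thesis unfolding f_def by (simp add: power_add field_simps)
    qed
    have "(\<lambda>i. f (i + q)) sums (S / 3 ^ q)"
      unfolding per by (rule sums_divide[OF fS])
    then have "f sums (S / 3 ^ q + (\<Sum>i<q. f i))" by (simp add: sums_iff_shift)
    then have SE: "S = S / 3 ^ q + (\<Sum>i<q. f i)" using fS sums_unique2 by blast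
    have "(\<Sum>d<q. a (q - 1 - d) * 3 ^ d) = 2 * K"
      unfolding K_def
    proof (rule sumD[OF _ D])
      fix d assume "d < q"
      then have "q - 1 - (q - 1 - d) mod q = d" by simp
      then show "a (q - 1 - d) = (if d \<in> D then 2 else 0)" unfolding a_def by simp
    qed
    then have "(\<Sum>i<q. f i) = real (2 * K) / 3 ^ q"
      unfolding f_def using finsum_rev[of a q] by simp
    with SE have X: "S * 3 ^ q = S + 2 * real K" by (simp add: field_simps)
    have Y: "2 * real p * real K + 1 = 3 ^ q"
      using arg_cong[OF K, of real] unfolding K_def by simp
    have "S * (2 * real p * real K) = S * 3 ^ q - S" using Y[symmetric] by (simp add: algebra_simps)
    with X have "S * (2 * real p * real K) = 2 * real K" by linarith
    moreover have "K \<noteq> 0"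
    proof
      assume "K = 0"
      then have "3 ^ q = (1::nat)" using K unfolding K_def by simp
      then show False using q0 by simp
    qed
    ultimately have "S = 1 / real p" using pp by (simp add: field_simps)
    then show "cantor_prime p"
      unfolding cantor_prime_def cantor_set3_def using assms(1) a2 fS f_def by blast
  qed
qed

end
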